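(* Let $p$ be a prime and $n$ a positive integer. Let $\overline{m}=\min\{m\in\mathbb{N} : v_p((pm)!)\geq n\}$. Then $$\mathcal{Q}_n=\big(q_{n,0}G_0(X),\,q_{n,1}G_1(X),\dots,q_{n,\overline{m}}G_{\overline{m}}(X)\big),$$ where $q_{n,m}=p^{\,n-v_p((pm)!)}$ for $0\leq m<\overline{m}$ and $q_{n,\overline{m}}=1$. More generally, for each $j\in\{0,\dots,p-1\}$, $$\mathcal{Q}_{n,j}=\big(q_{n,0}G_0(X-j),\dots,q_{n,\overline{m}}G_{\overline{m}}(X-j)\big).$$
   Context: Fix a prime $p$ and $n\geq1$. For $j\in\{0,\dots,p-1\}$, $\mathcal{Q}_{n,j}=\bigcap_{i\in\{0,\dots,p^n-1\},\ i\equiv j\ (\mathrm{mod}\ p)}(p^n,X-i)\subseteq\mathbb{Z}[X]$, and $\mathcal{Q}_n=\mathcal{Q}_{n,0}$. For $k\geq1$, $G_k(X)=\prod_{h=0}^{k-1}(X-hp)$, and $G_0(X)=1$. $v_p$ is the $p$-adic valuation. *)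

theory Defs
  imports "HOL-Computational_Algebra.Computational_Algebra"
begin

definition gen_ideal :: "'a::comm_ring_1 set \<Rightarrow> 'a set" where
  "gen_ideal S = {x. \<exists>c F. finite F \<and> F \<subseteq> S \<and> x = (\<Sum>s\<in>F. c s * s)}"

definition Qnj :: "nat \<Rightarrow> nat \<Rightarrow> nat \<Rightarrow> int poly set" where
  "Qnj p n j = (\<Inter>i\<in>{i. i < p ^ n \<and> i mod p = j}.
      gen_ideal {[:int p ^ n:], [:- int i, 1:]})"

definition Qn :: "nat \<Rightarrow> nat \<Rightarrow> int poly set" where
  "Qn p n = Qnj p n 0"

definition G :: "nat \<Rightarrow> nat \<Rightarrow> int poly" where
  "G p k = (\<Prod>h<k. [:- (int h * int p), 1:])"

end

theory Submission
  imports Defs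
begin


lemma gi_base: "s \<in> S \<Longrightarrow> s \<in> gen_ideal S"
  unfolding gen_ideal_def by (auto intro!: exI[of _ "{s}"] exI[of _ "\<lambda>_. 1"])

lemma gi_zero: "0 \<in> gen_ideal S"
  unfolding gen_ideal_def by (auto intro!: exI[of _ "{}"])

lemma gi_mult: "x \<in> gen_ideal S \<Longrightarrow> c * x \<in> gen_ideal S"
  unfolding gen_ideal_def
proof safe
  fix d F assume "finite F" "F \<subseteq> S"
  then show "\<exists>c' F'. finite F' \<and> F' \<subseteq> S \<and> c * (\<Sum>s\<in>F. d s * s) = (\<Sum>s\<in>F'. c' s * s)"
    by (intro exI[of _ "\<lambda>s. c * d s"] exI[of _ F]) (auto simp: sum_distrib_left mult.assoc)
qed

lemma gi_add: fixes x y :: "'a::comm_ring_1" shows "x \<in> gen_ideal S \<Longrightarrow> y \<in> gen_ideal S \<Longrightarrow> x + y \<in> gen_ideal S"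
  unfolding gen_ideal_def
proof safe
  fix c1 F1 c2 F2 assume f: "finite F1" "F1 \<subseteq> S" "finite F2" "F2 \<subseteq> S"
  define c :: "'a \<Rightarrow> 'a" where "c = (\<lambda>s. (if s \<in> F1 then c1 s else 0) + (if s \<in> F2 then c2 s else 0))"
  have "(\<Sum>s\<in>F1 \<union> F2. c s * s) = (\<Sum>s\<in>F1 \<union> F2. (if s \<in> F1 then c1 s * s else 0))
     + (\<Sum>s\<in>F1 \<union> F2. (if s \<in> F2 then c2 s * s else 0))"
    unfolding c_def by (auto simp: distrib_right sum.distrib intro!: sum.cong arg_cong2[where f="(+)"])
  also have "\<dots> = (\<Sum>s\<in>F1. c1 s * s) + (\<Sum>s\<in>F2. c2 s * s)"
    using f by (simp add: sum.If_cases Int_absorb1 Int_absorb2)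
  finally show "\<exists>c F. finite F \<and> F \<subseteq> S \<and> (\<Sum>s\<in>F1. c1 s * s) + (\<Sum>s\<in>F2. c2 s * s) = (\<Sum>s\<in>F. c s * s)"
    using f by (intro exI[of _ c] exI[of _ "F1 \<union> F2"]) auto
qed

lemma gi_sum: "finite A \<Longrightarrow> (\<And>a. a \<in> A \<Longrightarrow> g a \<in> gen_ideal S) \<Longrightarrow> sum g A \<in> gen_ideal S"
  by (induction A rule: finite_induct) (auto intro: gi_zero gi_add)

lemma gi_subset:
  assumes "\<And>s. s \<in> S \<Longrightarrow> s \<in> I" "0 \<in> I" "\<And>x y. x \<in> I \<Longrightarrow> y \<in> I \<Longrightarrow> x + y \<in> I"
    "\<And>c x. x \<in> I \<Longrightarrow> c * x \<in> I"
  shows "gen_ideal S \<subseteq> I"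
proof
  fix x assume "x \<in> gen_ideal S"
  then obtain c F where F: "finite F" "F \<subseteq> S" "x = (\<Sum>s\<in>F. c s * s)" unfolding gen_ideal_def by auto
  have "(\<Sum>s\<in>F. c s * s) \<in> I" using F(1,2)
    by (induction F rule: finite_induct) (auto intro: assms)
  then show "x \<in> I" using F by simp
qed

lemma mem2:
  fixes a b :: int
  shows "f \<in> gen_ideal {[:a:], [:-b,1:]} \<longleftrightarrow> a dvd poly f b"
proof
  assume "f \<in> gen_ideal {[:a:], [:-b,1:]}"
  moreover have "gen_ideal {[:a:], [:-b,1:]} \<subseteq> {f. a dvd poly f b}"
    by (rule gi_subset) (auto simp: dvd_add)
  ultimately show "a dvd poly f b" by auto
next
  assume "a dvd poly f b"
  then obtain t where t: "poly f b = a * t" by auto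
  have "f = [:t:] * [:a:] + synthetic_div f b * [:-b,1:]"
    using synthetic_div_correct'[of b f] t by (simp add: algebra_simps)
  also have "\<dots> \<in> gen_ideal {[:a:], [:-b,1:]}"
    by (intro gi_add gi_mult gi_base) auto
  finally show "f \<in> gen_ideal {[:a:], [:-b,1:]}" .
qed

lemma poly_cong_int:
  fixes f :: "int poly"
  shows "(a - b) dvd (poly f a - poly f b)"
proof (induction f)
  case 0 then show ?case by simp
next
  case (pCons c f)
  have "poly (pCons c f) a - poly (pCons c f) b = (a - b) * poly f a + b * (poly f a - poly f b)"
    by (simp add: algebra_simps)
  then show ?case using pCons by (simp add: dvd_add)
qed

lemma Qnj_char:
  assumes "prime p" "j < p" "n \<ge> 1"
  shows "Qnj p n j = {f. \<forall>k::nat. int p ^ n dvd poly f (int j + int p * int k)}"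
proof -
  have p0: "p > 0" using assms prime_gt_0_nat by auto
  have "Qnj p n j = {f. \<forall>i. i < p ^ n \<and> i mod p = j \<longrightarrow> int p ^ n dvd poly f (int i)}"
    unfolding Qnj_def by (auto simp: mem2)
  also have "\<dots> = {f. \<forall>k::nat. int p ^ n dvd poly f (int j + int p * int k)}"
  proof (intro Collect_cong iffI allI impI)
    fix f k assume H: "\<forall>i. i < p ^ n \<and> i mod p = j \<longrightarrow> int p ^ n dvd poly f (int i)"
    define i where "i = (j + p * k) mod p ^ n"
    have "i < p ^ n" using p0 unfolding i_def by simp
    moreover have "i mod p = j"
    proof (cases n)
      case 0 then show ?thesis using assms by simp
    next
      case (Suc m)
      then have "p dvd p ^ n" by simp
      then have "i mod p = (j + p * k) mod p" unfolding i_def by (simp add: mod_mod_cancel)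
      then show ?thesis using assms by simp
    qed
    ultimately have d1: "int p ^ n dvd poly f (int i)" using H by auto
    have "int p ^ n dvd (int (j + p * k) - int i)"
    proof -
      have "int (j + p * k) - int i = int (p ^ n) * (int (j+p*k) div int (p^n))"
        unfolding i_def by (simp add: of_nat_mod minus_mod_eq_mult_div)
      then show ?thesis by simp
    qed
    then have "int p ^ n dvd poly f (int (j + p*k)) - poly f (int i)"
      using poly_cong_int dvd_trans by blast
    then show "int p ^ n dvd poly f (int j + int p * int k)" using d1
      by (metis dvd_diff_commute dvd_add diff_add_cancel of_nat_add of_nat_mult)
  next
    fix f i assume H: "\<forall>k::nat. int p ^ n dvd poly f (int j + int p * int k)" "i < p ^ n \<and> i mod p = j"
    have "int i = int (i mod p) + int p * int (i div p)" by (metis of_nat_add of_nat_mult mod_mult_div_eq add.commute)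
    then show "int p ^ n dvd poly f (int i)" using H by metis
  qed
  finally show ?thesis .
qed



lemma fact_add_prod: "fact (a + r) = (fact a :: nat) * (\<Prod>i\<in>{1..r}. a + i)"
proof (induction r)
  case 0 then show ?case by simp
next
  case (Suc r)
  have "fact (a + Suc r) = (a + Suc r) * (fact (a + r) :: nat)" by simp
  also have "\<dots> = fact a * (\<Prod>i\<in>{1..Suc r}. a + i)"
    using Suc by (simp add: prod.cl_ivl_Suc algebra_simps)
  finally show ?case .
qed

lemma vfact:
  assumes "prime p"
  shows "multiplicity p (fact (p * m) :: nat) = multiplicity p (p ^ m * fact m)"
proof (induction m)
  case 0 then show ?case by simp
next
  case (Suc m)
  have p0: "p > 0" "p \<noteq> 0" and pe: "prime_elem p" using assms prime_gt_0_nat by auto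
  define c where "c = (\<Prod>i\<in>{1..p-1}. p * m + i)"
  have c0: "c \<noteq> 0" unfolding c_def by auto
  have cnd: "\<not> p dvd c"
  proof
    assume "p dvd c"
    then have "\<exists>i\<in>{1..p-1}. p dvd p * m + i"
      unfolding c_def using prime_dvd_prod_iff[OF _ assms, of "{1..p-1}" "\<lambda>i. p * m + i"] by simp
    then obtain i where i: "i \<in> {1..p-1}" "p dvd p * m + i" by blast
    then have "p dvd i" by (simp add: dvd_add_right_iff)
    with i show False using p0 by (auto dest: dvd_imp_le)
  qed
  have psuc: "p = Suc (p - 1)" using p0 by simp
  have "(\<Prod>i\<in>{1..p}. p * m + i) = (p * m + p) * c"
    unfolding c_def by (subst psuc, subst prod.cl_ivl_Suc) (use psuc in auto)
  then have f: "fact (p * Suc m) = fact (p * m) * ((p * Suc m) * c)"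
    using fact_add_prod[of "p*m" p] by (simp add: algebra_simps)
  have mc: "multiplicity p c = 0" using cnd by (simp add: not_dvd_imp_multiplicity_0)
  have "multiplicity p (fact (p * Suc m) :: nat) = multiplicity p (fact (p * m) :: nat) + multiplicity p (p * Suc m)"
    unfolding f using c0 p0 pe mc
    by (simp add: prime_elem_multiplicity_mult_distrib del: mult_Suc_right)
  also have "\<dots> = multiplicity p (p ^ m * fact m) + multiplicity p (p * Suc m)" using Suc by simp
  also have "\<dots> = multiplicity p ((p * Suc m) * (p ^ m * fact m))"
    using p0 pe by (simp add: prime_elem_multiplicity_mult_distrib del: mult_Suc_right)
  also have "(p * Suc m) * (p ^ m * fact m) = p ^ Suc m * fact (Suc m)"
    by (simp add: algebra_simps)
  finally show ?case .
qed

lemma vfact_ge: "prime p \<Longrightarrow> m \<le> multiplicity p (fact (p * m) :: nat)"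
  unfolding vfact
  by (rule multiplicity_geI) (auto simp: prime_gt_0_nat)

lemma prod_choose: "(\<Prod>h<m. int k - int h) = int (fact m * (k choose m))"
proof (induction m)
  case 0 then show ?case by simp
next
  case (Suc m)
  have "(\<Prod>h<Suc m. int k - int h) = int (fact m * (k choose m)) * (int k - int m)"
    using Suc by simp
  also have "\<dots> = int (fact (Suc m) * (k choose Suc m))"
  proof (cases "m \<le> k")
    case True
    have "(k choose m) * (k - m) = (k choose Suc m) * Suc m"
      by (metis binomial_absorb_comp binomial_absorption mult.commute)
    then have "int (k choose m) * (int k - int m) = int (k choose Suc m) * (int m + 1)"
      using True by (metis of_nat_Suc of_nat_diff of_nat_mult add.commute)
    then show ?thesis by (simp add: algebra_simps)
  next
    case False
    then show ?thesis by (simp add: binomial_eq_0)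
  qed
  finally show ?case .
qed



definition Hp :: "nat \<Rightarrow> nat \<Rightarrow> nat \<Rightarrow> int poly" where
  "Hp p j m = (\<Prod>h<m. [:-(int j + int h * int p), 1:])"

lemma H_eq: "pcompose (G p m) [:-int j, 1:] = Hp p j m"
  unfolding G_def Hp_def pcompose_prod
  by (intro prod.cong refl) (simp add: pcompose_pCons algebra_simps)

lemma Hp_Suc: "Hp p j (Suc m) = Hp p j m * [:-(int j + int m * int p), 1:]"
  unfolding Hp_def by simp

lemma Hp_0: "Hp p j 0 = 1"
  unfolding Hp_def by simp

lemma Hp_eval: "poly (Hp p j m) (int j + int p * int k) = int p ^ m * int (fact m * (k choose m))"
proof -
  have "poly (Hp p j m) (int j + int p * int k) = (\<Prod>h<m. int p * (int k - int h))"
    unfolding Hp_def poly_prod by (intro prod.cong refl) (simp add: algebra_simps)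
  also have "\<dots> = int p ^ m * (\<Prod>h<m. int k - int h)"
    by (simp add: prod.distrib)
  also have "\<dots> = int p ^ m * int (fact m * (k choose m))" by (simp add: prod_choose)
  finally show ?thesis .
qed

lemma expand: "\<exists>a s. f = (\<Sum>m<M. smult (a m) (Hp p j m)) + Hp p j M * s"
proof (induction M)
  case 0 then show ?case by (auto simp: Hp_0 intro!: exI[of _ f])
next
  case (Suc M)
  then obtain a s where as: "f = (\<Sum>m<M. smult (a m) (Hp p j m)) + Hp p j M * s" by blast
  define c where "c = int j + int M * int p"
  have "s = [:-c, 1:] * synthetic_div s c + [:poly s c:]" by (rule synthetic_div_correct'[symmetric])
  then have "Hp p j M * s = smult (poly s c) (Hp p j M) + Hp p j (Suc M) * synthetic_div s c"
  proof -
    from \<open>s = _\<close> have "Hp p j M * s = Hp p j M * ([:-c, 1:] * synthetic_div s c) + Hp p j M * [:poly s c:]"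
      by (metis distrib_left)
    also have "Hp p j M * [:poly s c:] = smult (poly s c) (Hp p j M)"
      by (simp add: mult.commute[of _ "[:poly s c:]"])
    also have "Hp p j M * ([:-c, 1:] * synthetic_div s c) = Hp p j (Suc M) * synthetic_div s c"
      unfolding Hp_Suc c_def by (rule mult.assoc[symmetric])
    finally show ?thesis by simp
  qed
  moreover have "(\<Sum>m<Suc M. smult ((a(M := poly s c)) m) (Hp p j m))
      = (\<Sum>m<M. smult (a m) (Hp p j m)) + smult (poly s c) (Hp p j M)"
    by simp
  ultimately have "f = (\<Sum>m<Suc M. smult ((a(M := poly s c)) m) (Hp p j m)) + Hp p j (Suc M) * synthetic_div s c"
    using as by (simp add: algebra_simps)
  then show ?case by blast
qed



lemma main_R:
  fixes p n j :: nat
  assumes pr: "prime p" and n1: "n \<ge> 1"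
  defines "mbar \<equiv> (LEAST m. multiplicity p (fact (p * m) :: nat) \<ge> n)"
  defines "q \<equiv> (\<lambda>m. if m < mbar then int p ^ (n - multiplicity p (fact (p * m) :: nat)) else 1)"
  shows "{f. \<forall>k::nat. int p ^ n dvd poly f (int j + int p * int k)}
     = gen_ideal ((\<lambda>m. smult (q m) (Hp p j m)) ` {0..mbar})"
proof -
  define v where "v m = multiplicity p (fact (p * m) :: nat)" for m
  have p0: "p > 0" using pr prime_gt_0_nat by auto
  have ex: "\<exists>m. n \<le> v m" using vfact_ge[OF pr, of n] unfolding v_def by blast
  have vge: "n \<le> v mbar" using LeastI_ex[OF ex] unfolding mbar_def v_def .
  have vlt: "v m < n" if "m < mbar" for m
    using not_less_Least[OF that[unfolded mbar_def]] unfolding v_def by simp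
  have qlt: "q m = int p ^ (n - v m)" if "m < mbar" for m
    using that unfolding q_def v_def by simp
  have qeq: "q mbar = 1" unfolding q_def by simp
  have dvdv: "int p ^ v m dvd int p ^ m * int (fact m)" for m
  proof -
    have "p ^ v m dvd p ^ m * fact m"
      unfolding v_def vfact[OF pr] by (rule multiplicity_dvd)
    then have "int (p ^ v m) dvd int (p ^ m * fact m)" by (simp only: int_dvd_int_iff)
    then show ?thesis by simp
  qed
  have decomp: "\<exists>u. int p ^ m * int (fact m) = int p ^ v m * int u \<and> \<not> p dvd u" for m
  proof -
    have nz: "p ^ m * fact m \<noteq> 0" using p0 by simp
    have nu: "\<not> is_unit p" using pr by auto
    obtain u where u: "p ^ m * fact m = p ^ multiplicity p (p ^ m * fact m) * u" "\<not> p dvd u"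
      using multiplicity_decompose'[OF nz nu] by blast
    have "int (p ^ m * fact m) = int (p ^ v m * u)"
      using u(1) unfolding v_def vfact[OF pr] by simp
    then show ?thesis using u(2) by (intro exI[of _ u]) simp
  qed
  define R where "R = {f. \<forall>k::nat. int p ^ n dvd poly f (int j + int p * int k)}"
  have gens: "int p ^ n dvd q m * poly (Hp p j m) (int j + int p * int k)" if "m \<le> mbar" for m k
  proof (cases "m < mbar")
    case True
    have "int p ^ (n - v m) * int p ^ v m dvd q m * (int p ^ m * int (fact m) * int (k choose m))"
      using qlt[OF True] dvdv[of m] by (intro mult_dvd_mono) auto
    moreover have "int p ^ (n - v m) * int p ^ v m = int p ^ n"
      using vlt[OF True] by (simp add: power_add[symmetric])
    ultimately show ?thesis by (simp add: Hp_eval mult.assoc)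
  next
    case False
    then have m: "m = mbar" using that by simp
    have "int p ^ n dvd int p ^ v m" using vge m by (simp add: le_imp_power_dvd)
    also have "\<dots> dvd int p ^ m * int (fact m)" by (rule dvdv)
    also have "\<dots> dvd q m * (int p ^ m * int (fact m) * int (k choose m))" by simp
    finally show ?thesis by (simp add: Hp_eval mult.assoc)
  qed
  have sub1: "gen_ideal ((\<lambda>m. smult (q m) (Hp p j m)) ` {0..mbar}) \<subseteq> R"
    by (rule gi_subset) (auto simp: R_def gens dvd_add)
  have sub2: "R \<subseteq> gen_ideal ((\<lambda>m. smult (q m) (Hp p j m)) ` {0..mbar})"
  proof
    fix f assume "f \<in> R"
    then have fR: "\<And>k. int p ^ n dvd poly f (int j + int p * int k)" unfolding R_def by auto
    obtain a s where as: "f = (\<Sum>m<mbar. smult (a m) (Hp p j m)) + Hp p j mbar * s"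
      using expand by blast
    have adv: "k < mbar \<longrightarrow> int p ^ (n - v k) dvd a k" for k
    proof (induction k rule: less_induct)
      case (less k)
      show ?case
      proof
        assume k: "k < mbar"
        define x where "x = int j + int p * int k"
        have pf: "poly f x = (\<Sum>m<mbar. a m * poly (Hp p j m) x) + poly (Hp p j mbar) x * poly s x"
          by (subst as) (simp add: poly_sum)
        have z: "poly (Hp p j mbar) x = 0" unfolding x_def Hp_eval using k by (simp add: binomial_eq_0)
        have rest: "int p ^ n dvd (\<Sum>m\<in>{..<mbar} - {k}. a m * poly (Hp p j m) x)"
        proof (rule dvd_sum)
          fix m assume m: "m \<in> {..<mbar} - {k}"
          show "int p ^ n dvd a m * poly (Hp p j m) x"
          proof (cases "m < k")
            case True
            have "int p ^ (n - v m) * int p ^ v m dvd a m * (int p ^ m * int (fact m) * int (k choose m))"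
              using less.IH[OF True] m dvdv[of m] by (intro mult_dvd_mono) auto
            moreover have "int p ^ (n - v m) * int p ^ v m = int p ^ n"
              using vlt[of m] m by (simp add: power_add[symmetric])
            ultimately show ?thesis unfolding x_def by (simp add: Hp_eval mult.assoc)
          next
            case False
            then have "k < m" using m by auto
            then show ?thesis unfolding x_def by (simp add: Hp_eval binomial_eq_0)
          qed
        qed
        have pfk: "poly f x = a k * poly (Hp p j k) x + (\<Sum>m\<in>{..<mbar} - {k}. a m * poly (Hp p j m) x)"
          unfolding pf z using k by (simp add: sum.remove)
        then have "int p ^ n dvd a k * poly (Hp p j k) x"
        proof -
          have "a k * poly (Hp p j k) x = poly f x - (\<Sum>m\<in>{..<mbar} - {k}. a m * poly (Hp p j m) x)"
            using pfk by simp
          moreover have "int p ^ n dvd poly f x" using fR[of k] unfolding x_def .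
          ultimately show ?thesis using rest by (simp add: dvd_diff)
        qed
        moreover obtain u where u: "int p ^ k * int (fact k) = int p ^ v k * int u" "\<not> p dvd u"
          using decomp by blast
        ultimately have "int p ^ v k * int p ^ (n - v k) dvd int p ^ v k * (a k * int u)"
        proof -
          have "a k * poly (Hp p j k) x = a k * (int p ^ k * int (fact k))"
            unfolding x_def Hp_eval by simp
          also have "\<dots> = int p ^ v k * (a k * int u)" using u(1) by simp
          finally have e: "a k * poly (Hp p j k) x = int p ^ v k * (a k * int u)" .
          have "int p ^ v k * int p ^ (n - v k) = int p ^ n"
            using vlt[OF k] by (simp add: power_add[symmetric])
          then show ?thesis using \<open>int p ^ n dvd a k * poly (Hp p j k) x\<close> unfolding e by metis
        qed
        then have d: "int p ^ (n - v k) dvd a k * int u"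
          using p0 by (subst (asm) dvd_times_left_cancel_iff) auto
        have "coprime (int p) (int u)"
          using pr u(2) by (intro prime_imp_coprime) (auto simp: prime_nat_int_transfer int_dvd_int_iff)
        then have "coprime (int p ^ (n - v k)) (int u)" by simp
        then show "int p ^ (n - v k) dvd a k" using d coprime_dvd_mult_left_iff by blast
      qed
    qed
    have "(\<Sum>m<mbar. smult (a m) (Hp p j m)) \<in> gen_ideal ((\<lambda>m. smult (q m) (Hp p j m)) ` {0..mbar})"
    proof (rule gi_sum)
      fix m assume m: "m \<in> {..<mbar}"
      then obtain b where b: "a m = int p ^ (n - v m) * b" using adv by blast
      have "smult (a m) (Hp p j m) = [:b:] * smult (q m) (Hp p j m)"
        using m b qlt[of m] by (simp add: mult.commute)
      also have "\<dots> \<in> gen_ideal ((\<lambda>m. smult (q m) (Hp p j m)) ` {0..mbar})"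
        using m by (intro gi_mult gi_base) auto
      finally show "smult (a m) (Hp p j m) \<in> gen_ideal ((\<lambda>m. smult (q m) (Hp p j m)) ` {0..mbar})" .
    qed auto
    moreover have "Hp p j mbar * s \<in> gen_ideal ((\<lambda>m. smult (q m) (Hp p j m)) ` {0..mbar})"
    proof -
      have "Hp p j mbar * s = s * smult (q mbar) (Hp p j mbar)" using qeq by (simp add: mult.commute)
      also have "\<dots> \<in> gen_ideal ((\<lambda>m. smult (q m) (Hp p j m)) ` {0..mbar})"
        by (intro gi_mult gi_base) auto
      finally show ?thesis .
    qed
    ultimately show "f \<in> gen_ideal ((\<lambda>m. smult (q m) (Hp p j m)) ` {0..mbar})"
      using as gi_add by metis
  qed
  show ?thesis using sub1 sub2 unfolding R_def by blast
qed


theorem mainTheorem16: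
  fixes p n :: nat
  assumes "prime p" and "n \<ge> 1"
  defines "mbar \<equiv> (LEAST m. multiplicity p (fact (p * m) :: nat) \<ge> n)"
  defines "q \<equiv> (\<lambda>m. if m < mbar then int p ^ (n - multiplicity p (fact (p * m) :: nat)) else 1)"
  shows "Qn p n = gen_ideal ((\<lambda>m. smult (q m) (G p m)) ` {0..mbar})
    \<and> (\<forall>j < p. Qnj p n j =
          gen_ideal ((\<lambda>m. smult (q m) (pcompose (G p m) [:- int j, 1:])) ` {0..mbar}))"
proof -
  have gen: "Qnj p n j = gen_ideal ((\<lambda>m. smult (q m) (pcompose (G p m) [:- int j, 1:])) ` {0..mbar})"
    if "j < p" for j
    using Qnj_char[OF assms(1) that assms(2)] main_R[OF assms(1,2), of j]
    unfolding H_eq mbar_def q_def by simp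
  have p0: "0 < p" using assms(1) prime_gt_0_nat by auto
  show ?thesis using gen[OF p0] gen by (simp add: Qn_def)
qed

end
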